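(* Let $n\ge1$, $i,j\ge0$, and let $K$ be a finite ordered simplicial complex that is an $n$-pseudomanifold along $(\widehat{d_i},\widehat{d_j})$, with or without boundary. Let $\mathcal G$ be the subgraph of the $(n-1,\widehat{d_i},\widehat{d_j})$-graph of $K$ induced by the $n$-simplices. Then the directed flag complex of $\mathcal G$ has no simplices of dimension $\ge2$ (i.e. it has dimension at most $1$).
   Context: An ordered simplicial complex on a vertex set $V$ is a finite collection of non-empty finite tuples of pairwise distinct elements of $V$ closed under taking non-empty subsequences; $\dim(v_0,\dots,v_n)=n$. $\alpha\hookrightarrow\sigma$ means $\alpha$ is a non-empty subsequence of $\sigma$ (every simplex is a face of itself); a simplex is maximal if it is a face of no other simplex. For an $n$-simplex $\sigma=(v_0,\dots,v_n)$, $\widehat{d_i}(\sigma)$ is obtained by deleting $v_i$ if $i<n$ and deleting $v_n$ if $i\ge n$. For $\sigma,\tau$ of dimension $\ge q$, $(\sigma,\tau)$ is $q$-near along $(\widehat{d_i},\widehat{d_j})$ if $\sigma\hookrightarrow\tau$ or there is a $q$-simplex $\alpha\in K$ with $\alpha\hookrightarrow\widehat{d_i}(\sigma)$ and $\alpha\hookrightarrow\widehat{d_j}(\tau)$; $(\sigma,\tau)$ is $q$-connected along $(\widehat{d_i},\widehat{d_j})$ if there is a finite sequence from $\sigma$ to $\tau$ whose consecutive ordered pairs are $q$-near along $(\widehat{d_i},\widehat{d_j})$. The $(q,\widehat{d_i},\widehat{d_j})$-graph of $K$ is the directed graph with vertex set the simplices of dimension $\ge q$ and a directed edge $(\sigma,\tau)$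 for every ordered pair $\sigma\neq\tau$ that is $q$-near along $(\widehat{d_i},\widehat{d_j})$. $K$ is an $n$-pseudomanifold along $(\widehat{d_i},\widehat{d_j})$ if all maximal simplices are $n$-simplices, each $(n-1)$-simplex is a face of exactly two $n$-simplices, and any two $n$-simplices are $(n-1)$-connected along $(\widehat{d_i},\widehat{d_j})$; "with boundary" means the same with "exactly two" replaced by "at most two". The directed flag complex of a directed graph (without loops, reciprocal edges allowed) is the ordered simplicial complex whose $k$-simplices are the tuples $(x_0,\dots,x_k)$ of distinct vertices such that $(x_a,x_b)$ is an edge for all $a<b$. *)

theory Defs
  imports Main "HOL-Library.Sublist"
begin

text \<open>Ordered simplices are represented as lists of pairwise distinct vertices;
  a subsequence (face) relation is the library's subseq.\<close>

definition ordered_simplicial_complex :: "'v list set \<Rightarrow> bool" where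
  "ordered_simplicial_complex K \<longleftrightarrow>
     finite K \<and>
     (\<forall>\<sigma>\<in>K. \<sigma> \<noteq> [] \<and> distinct \<sigma>) \<and>
     (\<forall>\<sigma>\<in>K. \<forall>\<alpha>. \<alpha> \<noteq> [] \<and> subseq \<alpha> \<sigma> \<longrightarrow> \<alpha> \<in> K)"

definition sdim :: "'v list \<Rightarrow> nat" where
  "sdim \<sigma> = length \<sigma> - 1"

definition dhat :: "nat \<Rightarrow> 'v list \<Rightarrow> 'v list" where
  "dhat i \<sigma> = (if i < sdim \<sigma> then take i \<sigma> @ drop (Suc i) \<sigma> else butlast \<sigma>)"

definition maximal_simplex :: "'v list set \<Rightarrow> 'v list \<Rightarrow> bool" where
  "maximal_simplex K \<sigma> \<longleftrightarrow> \<sigma> \<in> K \<and> (\<forall>\<tau>\<in>K. subseq \<sigma> \<tau> \<longrightarrow> \<tau> = \<sigma>)"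

definition q_near :: "'v list set \<Rightarrow> nat \<Rightarrow> nat \<Rightarrow> nat \<Rightarrow> 'v list \<Rightarrow> 'v list \<Rightarrow> bool" where
  "q_near K q i j \<sigma> \<tau> \<longleftrightarrow>
     \<sigma> \<in> K \<and> \<tau> \<in> K \<and> sdim \<sigma> \<ge> q \<and> sdim \<tau> \<ge> q \<and>
     (subseq \<sigma> \<tau> \<or>
      (\<exists>\<alpha>\<in>K. sdim \<alpha> = q \<and> subseq \<alpha> (dhat i \<sigma>) \<and> subseq \<alpha> (dhat j \<tau>)))"

definition q_connected :: "'v list set \<Rightarrow> nat \<Rightarrow> nat \<Rightarrow> nat \<Rightarrow> 'v list \<Rightarrow> 'v list \<Rightarrow> bool" where
  "q_connected K q i j \<sigma> \<tau> \<longleftrightarrow>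
     (\<exists>s :: 'v list list. s \<noteq> [] \<and> hd s = \<sigma> \<and> last s = \<tau> \<and>
        (\<forall>k < length s - 1. q_near K q i j (s ! k) (s ! Suc k)))"

definition pseudomanifold_along :: "'v list set \<Rightarrow> nat \<Rightarrow> nat \<Rightarrow> nat \<Rightarrow> bool" where
  "pseudomanifold_along K n i j \<longleftrightarrow>
     (\<forall>\<sigma>. maximal_simplex K \<sigma> \<longrightarrow> sdim \<sigma> = n) \<and>
     (\<forall>\<alpha>\<in>K. sdim \<alpha> = n - 1 \<longrightarrow> card {\<tau>\<in>K. sdim \<tau> = n \<and> subseq \<alpha> \<tau>} = 2) \<and>
     (\<forall>\<sigma>\<in>K. \<forall>\<tau>\<in>K. sdim \<sigma> = n \<and> sdim \<tau> = n \<longrightarrow> q_connected K (n - 1) i j \<sigma> \<tau>)"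

definition pseudomanifold_with_boundary_along :: "'v list set \<Rightarrow> nat \<Rightarrow> nat \<Rightarrow> nat \<Rightarrow> bool" where
  "pseudomanifold_with_boundary_along K n i j \<longleftrightarrow>
     (\<forall>\<sigma>. maximal_simplex K \<sigma> \<longrightarrow> sdim \<sigma> = n) \<and>
     (\<forall>\<alpha>\<in>K. sdim \<alpha> = n - 1 \<longrightarrow> card {\<tau>\<in>K. sdim \<tau> = n \<and> subseq \<alpha> \<tau>} \<le> 2) \<and>
     (\<forall>\<sigma>\<in>K. \<forall>\<tau>\<in>K. sdim \<sigma> = n \<and> sdim \<tau> = n \<longrightarrow> q_connected K (n - 1) i j \<sigma> \<tau>)"

definition qgraph_vertices :: "'v list set \<Rightarrow> nat \<Rightarrow> 'v list set" where
  "qgraph_vertices K q = {\<sigma>\<in>K. sdim \<sigma> \<ge> q}"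

definition qgraph_edges :: "'v list set \<Rightarrow> nat \<Rightarrow> nat \<Rightarrow> nat \<Rightarrow> ('v list \<times> 'v list) set" where
  "qgraph_edges K q i j = {(\<sigma>, \<tau>). \<sigma> \<in> qgraph_vertices K q \<and> \<tau> \<in> qgraph_vertices K q \<and>
                                   \<sigma> \<noteq> \<tau> \<and> q_near K q i j \<sigma> \<tau>}"

definition induced_edges :: "('a \<times> 'a) set \<Rightarrow> 'a set \<Rightarrow> ('a \<times> 'a) set" where
  "induced_edges E W = {(x, y). (x, y) \<in> E \<and> x \<in> W \<and> y \<in> W}"

definition directed_flag_complex :: "'a set \<Rightarrow> ('a \<times> 'a) set \<Rightarrow> 'a list set" where
  "directed_flag_complex V E =
     {xs. xs \<noteq> [] \<and> distinct xs \<and> set xs \<subseteq> V \<and>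
          (\<forall>a b. a < b \<and> b < length xs \<longrightarrow> (xs ! a, xs ! b) \<in> E)}"

end

theory Submission
  imports Defs
begin

lemma dhat_len: "length (dhat i s) = length s - 1"
  unfolding dhat_def sdim_def by auto

lemma dhat_subseq: "subseq (dhat i s) s"
proof (cases "i < sdim s")
  case True
  hence il: "i < length s" by (simp add: sdim_def)
  have "subseq (drop (Suc i) s) (s ! i # drop (Suc i) s)"
    by (rule list_emb_Cons) (rule list_emb_refl, simp)
  hence "subseq (take i s @ drop (Suc i) s) (take i s @ drop i s)"
    unfolding subseq_append' using il by (simp add: Cons_nth_drop_Suc)
  then show ?thesis using True by (simp only: dhat_def if_True append_take_drop_id)
next
  case False
  have "prefix (butlast s) s" by (simp add: butlast_conv_take take_is_prefix)
  then show ?thesis using False by (auto simp: dhat_def)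
qed

lemma edge_eq:
  assumes "(x, y) \<in> induced_edges (qgraph_edges K (n - 1) i j) {\<sigma>\<in>K. sdim \<sigma> = n}"
    and "n \<ge> 1" and osc: "ordered_simplicial_complex K"
  shows "dhat i x = dhat j y \<and> x \<in> K \<and> y \<in> K \<and> sdim x = n \<and> sdim y = n \<and> x \<noteq> y
     \<and> dhat i x \<in> K"
proof -
  from assms have xy: "x \<in> K" "y \<in> K" "sdim x = n" "sdim y = n" "x \<noteq> y"
    and nr: "q_near K (n - 1) i j x y"
    by (auto simp: induced_edges_def qgraph_edges_def)
  have lx: "length x = n + 1" "length y = n + 1" using xy assms(2) by (auto simp: sdim_def)
  have "\<not> subseq x y" using xy lx subseq_same_length by metis
  then obtain \<alpha> where a: "\<alpha> \<in> K" "sdim \<alpha> = n - 1" "subseq \<alpha> (dhat i x)" "subseq \<alpha> (dhat j y)"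
    using nr by (auto simp: q_near_def)
  have "\<alpha> \<noteq> []" using a(1) osc by (simp add: ordered_simplicial_complex_def)
  hence la: "length \<alpha> = n" using a(2) assms(2) by (cases \<alpha>) (auto simp: sdim_def)
  have "\<alpha> = dhat i x" using a(3) la lx by (simp add: dhat_len subseq_same_length)
  moreover have "\<alpha> = dhat j y" using a(4) la lx by (simp add: dhat_len subseq_same_length)
  ultimately show ?thesis using xy a by auto
qed

theorem proposition4:
  fixes K :: "'v list set" and n i j :: nat
  assumes "n \<ge> 1"
    and "ordered_simplicial_complex K"
    and "pseudomanifold_along K n i j \<or> pseudomanifold_with_boundary_along K n i j"
  shows "\<forall>s \<in> directed_flag_complex {\<sigma>\<in>K. sdim \<sigma> = n}
                 (induced_edges (qgraph_edges K (n - 1) i j) {\<sigma>\<in>K. sdim \<sigma> = n}).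
           sdim s \<le> 1"
proof
  fix s assume s: "s \<in> directed_flag_complex {\<sigma>\<in>K. sdim \<sigma> = n}
                 (induced_edges (qgraph_edges K (n - 1) i j) {\<sigma>\<in>K. sdim \<sigma> = n})"
  show "sdim s \<le> 1"
  proof (rule ccontr)
    assume "\<not> sdim s \<le> 1"
    hence len: "length s \<ge> 3" by (simp add: sdim_def)
    let ?E = "induced_edges (qgraph_edges K (n - 1) i j) {\<sigma>\<in>K. sdim \<sigma> = n}"
    have e01: "(s!0, s!1) \<in> ?E" and e02: "(s!0, s!2) \<in> ?E" and e12: "(s!1, s!2) \<in> ?E"
      using s len unfolding directed_flag_complex_def by auto
    note A = edge_eq[OF e01 assms(1) assms(2)] and B = edge_eq[OF e02 assms(1) assms(2)] and C = edge_eq[OF e12 assms(1) assms(2)]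
    define F where "F = dhat i (s!0)"
    have FK: "F \<in> K" using A F_def by auto
    have Fd: "sdim F = n - 1" using A F_def by (simp add: sdim_def dhat_len)
    have "{s!0, s!1, s!2} \<subseteq> {\<tau>\<in>K. sdim \<tau> = n \<and> subseq F \<tau>}"
    proof -
      have "subseq F (s!0)" unfolding F_def by (rule dhat_subseq)
      moreover have "subseq F (s!1)" using A dhat_subseq[of j "s!1"] unfolding F_def by simp
      moreover have "subseq F (s!2)" using B dhat_subseq[of j "s!2"] unfolding F_def by simp
      ultimately show ?thesis using A B by simp
    qed
    moreover have "finite {\<tau>\<in>K. sdim \<tau> = n \<and> subseq F \<tau>}"
      using assms(2) by (simp add: ordered_simplicial_complex_def)
    ultimately have "card {s!0, s!1, s!2} \<le> card {\<tau>\<in>K. sdim \<tau> = n \<and> subseq F \<tau>}"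
      by (rule card_mono[rotated])
    moreover have "card {s!0, s!1, s!2} = 3" using A B C by auto
    moreover have "card {\<tau>\<in>K. sdim \<tau> = n \<and> subseq F \<tau>} \<le> 2"
      using assms(3) FK Fd unfolding pseudomanifold_along_def pseudomanifold_with_boundary_along_def
      by auto
    ultimately show False by simp
  qed
qed

end
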